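(* Let $L\to M$ be a line bundle, let $J$ be a Jacobi structure on $L$ with corresponding Dirac-Jacobi structure $\mathcal{L}_J\subseteq\mathbb{D}L$, and let $\iota\colon N\hookrightarrow M$ be a cosymplectic transversal. Then $$J^\sharp(\mathrm{Ann}(DL_N))\oplus DL_N=DL|_N .$$
   Context: $DL$ is the gauge algebroid of $L$, $J^1L$ the jet bundle, $DL\cong(J^1L)^*\otimes L$, $\mathbb{D}L=DL\oplus J^1L$. A Jacobi structure is $J\in\Gamma(\wedge^2(J^1L)^*\otimes L)$ such that $\{\lambda,\mu\}=J(j^1\lambda,j^1\mu)$ is a Lie bracket; $J^\sharp\colon J^1L\to DL$ is the induced skew map, and $\mathcal{L}_J=\{(J^\sharp\psi,\psi):\psi\in J^1L\}$. For the inclusion $I\colon L_N=L|_N\to L$, $DL_N\subseteq DL|_N$ via $DI$, $\mathrm{Ann}(DL_N)\subseteq J^1L|_N$ its annihilator, and $\mathfrak{B}_I(\mathcal{L}_J)=\{(\Delta,(DI)^*\psi):(DI(\Delta),\psi)\in\mathcal{L}_J\}$. $N$ is a transversal if $DL_N+J^\sharp(J^1L|_N)=DL|_N$, and a cosymplectic transversal if moreover $DL_N\cap\mathfrak{B}_I(\mathcal{L}_J)=\{0\}$. *)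

theory Defs
  imports "HOL-Analysis.Analysis"
begin

(* Fibrewise (pointwise at x in N) linear-algebra model.
   'v  : fibre DL_x of the gauge algebroid (finite-dimensional real vector space)
   'l  : fibre L_x of the line bundle (DIM = 1)
   J^1L_x = Hom(DL_x, L_x)  (since DL = (J^1L)^* (x) L), modelled as linear maps 'v => 'l
   W   : DL_N at x, a subspace of DL_x (via DI). *)

type_synonym ('v, 'l) jet = "'v \<Rightarrow> 'l"

definition jets :: "('v::real_vector, 'l::real_vector) jet set" where
  "jets = {\<psi>. linear \<psi>}"

definition Ann :: "'v::real_vector set \<Rightarrow> ('v, 'l::real_vector) jet set" where
  "Ann W = {\<psi>. linear \<psi> \<and> (\<forall>w\<in>W. \<psi> w = 0)}"

(* J^sharp : J^1L -> DL induced by a skew-symmetric L-valued bilinear form J on J^1L,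
   J(psi, phi) = phi (J^sharp psi). *)
definition jacobi_sharp :: "(('v::real_vector, 'l::real_vector) jet \<Rightarrow> 'v) \<Rightarrow> bool" where
  "jacobi_sharp Js \<longleftrightarrow>
     (\<forall>\<psi> \<phi>. linear \<psi> \<longrightarrow> linear \<phi> \<longrightarrow> Js (\<lambda>v. \<psi> v + \<phi> v) = Js \<psi> + Js \<phi>) \<and>
     (\<forall>\<psi> c. linear \<psi> \<longrightarrow> Js (\<lambda>v. c *\<^sub>R \<psi> v) = c *\<^sub>R Js \<psi>) \<and>
     (\<forall>\<psi> \<phi>. linear \<psi> \<longrightarrow> linear \<phi> \<longrightarrow> \<phi> (Js \<psi>) = - \<psi> (Js \<phi>))"

definition dirac_jacobi :: "(('v::real_vector, 'l::real_vector) jet \<Rightarrow> 'v) \<Rightarrow> ('v \<times> ('v, 'l) jet) set" where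
  "dirac_jacobi Js = {(Js \<psi>, \<psi>) | \<psi>. linear \<psi>}"

(* (DI)^* psi : restriction of psi to DL_N (extended by 0 off W to get a total function) *)
definition restr :: "'v set \<Rightarrow> ('v, 'l::zero) jet \<Rightarrow> ('v, 'l) jet" where
  "restr W \<psi> = (\<lambda>w. if w \<in> W then \<psi> w else 0)"

definition backward_image :: "'v set \<Rightarrow> ('v \<times> ('v, 'l::zero) jet) set \<Rightarrow> ('v \<times> ('v, 'l) jet) set" where
  "backward_image W LL = {(\<Delta>, restr W \<psi>) | \<Delta> \<psi>. \<Delta> \<in> W \<and> (\<Delta>, \<psi>) \<in> LL}"

definition transversal :: "'v::real_vector set \<Rightarrow> (('v, 'l::real_vector) jet \<Rightarrow> 'v) \<Rightarrow> bool" where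
  "transversal W Js \<longleftrightarrow> {w + Js \<psi> | w \<psi>. w \<in> W \<and> linear \<psi>} = UNIV"

definition cosymplectic_transversal :: "'v::real_vector set \<Rightarrow> (('v, 'l::real_vector) jet \<Rightarrow> 'v) \<Rightarrow> bool" where
  "cosymplectic_transversal W Js \<longleftrightarrow> transversal W Js \<and>
     {(\<Delta>, (\<lambda>_. 0)) | \<Delta>. \<Delta> \<in> W} \<inter> backward_image W (dirac_jacobi Js) = {(0, (\<lambda>_. 0))}"

end

theory Submission
  imports Defs
begin

lemma sep_functional:
  fixes S :: "'v::euclidean_space set"
  assumes "v \<notin> span S"
  obtains z where "\<And>w. w \<in> span S \<Longrightarrow> inner z w = 0" "inner z v \<noteq> 0"
proof -
  obtain y z where y: "y \<in> span S" and z: "\<And>w. w \<in> span S \<Longrightarrow> orthogonal z w"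
    and v: "v = y + z" using orthogonal_subspace_decomp_exists[of S v] by blast
  have "z \<noteq> 0" using assms y v by auto
  moreover have "inner z v = inner z z" using z[OF y] v
    by (simp add: orthogonal_def inner_add_right)
  ultimately have "inner z v \<noteq> 0" by simp
  moreover have "\<And>w. w \<in> span S \<Longrightarrow> inner z w = 0" using z by (simp add: orthogonal_def)
  ultimately show ?thesis using that by blast
qed

lemma lin_psi:
  fixes z :: "'v::euclidean_space" and e :: "'l::real_vector"
  shows "linear (\<lambda>x. inner z x *\<^sub>R e)"
  by (intro linearI) (auto simp: inner_add_right scaleR_add_left)

theorem mainTheorem11:
  fixes W :: "'v::euclidean_space set"
    and Js :: "('v \<Rightarrow> 'l::euclidean_space) \<Rightarrow> 'v"
  assumes "DIM('l) = 1"
    and "subspace W"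
    and "jacobi_sharp Js"
    and "cosymplectic_transversal W Js"
  shows "{a + w | a w. a \<in> Js ` Ann W \<and> w \<in> W} = UNIV \<and> Js ` Ann W \<inter> W = {0}"
proof -
  have add: "\<And>\<psi> \<phi>. linear \<psi> \<Longrightarrow> linear \<phi> \<Longrightarrow> Js (\<lambda>v. \<psi> v + \<phi> v) = Js \<psi> + Js \<phi>"
   and smul: "\<And>\<psi> c. linear \<psi> \<Longrightarrow> Js (\<lambda>v. c *\<^sub>R \<psi> v) = c *\<^sub>R Js \<psi>"
   and skew: "\<And>\<psi> \<phi>. linear \<psi> \<Longrightarrow> linear \<phi> \<Longrightarrow> \<phi> (Js \<psi>) = - \<psi> (Js \<phi>)"
    using assms(3) unfolding jacobi_sharp_def by blast+
  have tr: "{w + Js \<psi> | w \<psi>. w \<in> W \<and> linear \<psi>} = UNIV"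
   and cs: "{(\<Delta>, (\<lambda>_. 0)) | \<Delta>. \<Delta> \<in> W} \<inter> backward_image W (dirac_jacobi Js) = {(0, (\<lambda>_. 0))}"
    using assms(4) unfolding cosymplectic_transversal_def transversal_def by blast+
  have lin0: "linear (\<lambda>v::'v. 0::'l)" by (rule linear_zero)
  have Js0: "Js (\<lambda>_. 0) = 0" using smul[OF lin0, of 0] by simp
  let ?U = "Js ` Ann W"
  have W0: "0 \<in> W" using assms(2) by (simp add: subspace_0)
  have A0: "(\<lambda>_. 0::'l) \<in> Ann W" using lin0 unfolding Ann_def by simp
  have inter: "?U \<inter> W = {0}"
  proof
    have "0 \<in> ?U" using Js0 A0 by (metis image_eqI)
    then show "{0} \<subseteq> ?U \<inter> W" using W0 by blast
    show "?U \<inter> W \<subseteq> {0}"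
    proof
      fix a assume "a \<in> ?U \<inter> W"
      then obtain \<psi> where p: "\<psi> \<in> Ann W" "a = Js \<psi>" "a \<in> W" by auto
      have "restr W \<psi> = (\<lambda>_. 0)" using p(1) by (auto simp: restr_def Ann_def)
      moreover have "(a, \<psi>) \<in> dirac_jacobi Js" using p by (auto simp: dirac_jacobi_def Ann_def)
      ultimately have "(a, (\<lambda>_. 0)) \<in> backward_image W (dirac_jacobi Js)"
        using p(3) unfolding backward_image_def by force
      then have "(a, (\<lambda>_::'v. 0::'l)) \<in> {(0, (\<lambda>_. 0))}" using cs p(3) by blast
      then show "a \<in> {0}" by simp
    qed
  qed
  have subU: "subspace ?U"
    unfolding subspace_def
  proof (intro conjI ballI allI)
    have "Js (\<lambda>_. 0) \<in> ?U" using A0 by (rule imageI)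
    then show "0 \<in> ?U" using Js0 by simp
  next
    fix x y assume "x \<in> ?U" "y \<in> ?U"
    then obtain \<psi> \<phi> where h: "\<psi> \<in> Ann W" "\<phi> \<in> Ann W" "x = Js \<psi>" "y = Js \<phi>" by auto
    have l: "linear \<psi>" "linear \<phi>" using h(1,2) unfolding Ann_def by auto
    have "linear (\<lambda>v. \<psi> v + \<phi> v)" using l by (rule linear_compose_add)
    then have m: "(\<lambda>v. \<psi> v + \<phi> v) \<in> Ann W" using h(1,2) unfolding Ann_def by auto
    have "x + y = Js (\<lambda>v. \<psi> v + \<phi> v)" using add[OF l] h(3,4) by simp
    then show "x + y \<in> ?U" using m by blast
  next
    fix c :: real and x assume "x \<in> ?U"
    then obtain \<psi> where h: "\<psi> \<in> Ann W" "x = Js \<psi>" by auto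
    have l: "linear \<psi>" using h(1) unfolding Ann_def by auto
    have "linear (\<lambda>v. c *\<^sub>R \<psi> v)" using l by (rule linear_compose_scale_right)
    then have m: "(\<lambda>v. c *\<^sub>R \<psi> v) \<in> Ann W" using h(1) unfolding Ann_def by auto
    have "c *\<^sub>R x = Js (\<lambda>v. c *\<^sub>R \<psi> v)" using smul[OF l] h(2) by simp
    then show "c *\<^sub>R x \<in> ?U" using m by blast
  qed
  have spanUW: "span (?U \<union> W) = {a + w | a w. a \<in> ?U \<and> w \<in> W}"
  proof -
    have e1: "span ?U = ?U" using subU by (simp add: span_eq_iff)
    have e2: "span W = W" using assms(2) by (simp add: span_eq_iff)
    show ?thesis using span_Un[of ?U W] unfolding e1 e2 .
  qed
  obtain e :: 'l where e: "e \<in> Basis" using nonempty_Basis by blast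
  then have e: "e \<noteq> 0" by (rule nonzero_Basis)
  have "span (?U \<union> W) = UNIV"
  proof (rule ccontr)
    assume "span (?U \<union> W) \<noteq> UNIV"
    then obtain v where "v \<notin> span (?U \<union> W)" by auto
    then obtain z where z0: "\<And>w. w \<in> span (?U \<union> W) \<Longrightarrow> inner z w = 0" and zv: "inner z v \<noteq> 0"
      using sep_functional[of v "?U \<union> W"] by blast
    define \<psi> where "\<psi> = (\<lambda>x. inner z x *\<^sub>R e)"
    have lp: "linear \<psi>" unfolding \<psi>_def by (rule lin_psi)
    have pW: "\<And>w. w \<in> W \<Longrightarrow> \<psi> w = 0" unfolding \<psi>_def using z0 by (simp add: span_base)
    have pU: "\<And>u. u \<in> ?U \<Longrightarrow> \<psi> u = 0" unfolding \<psi>_def using z0 by (simp add: span_base)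
    have pA: "\<psi> \<in> Ann W" using lp pW by (simp add: Ann_def)
    have JU: "Js \<psi> \<in> ?U" using pA by simp
    have JW: "Js \<psi> \<in> W"
    proof (rule ccontr)
      assume "Js \<psi> \<notin> W"
      then have "Js \<psi> \<notin> span W" using assms(2) by (metis span_eq_iff)
      then obtain z' where z'0: "\<And>w. w \<in> span W \<Longrightarrow> inner z' w = 0" and z'v: "inner z' (Js \<psi>) \<noteq> 0"
        using sep_functional[of "Js \<psi>" W] by blast
      define \<phi> where "\<phi> = (\<lambda>x. inner z' x *\<^sub>R e)"
      have lf: "linear \<phi>" unfolding \<phi>_def by (rule lin_psi)
      have fA: "\<phi> \<in> Ann W" using lf z'0 by (simp add: Ann_def \<phi>_def span_base)
      have "\<phi> (Js \<psi>) = - \<psi> (Js \<phi>)" using skew lp lf by blast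
      also have "\<psi> (Js \<phi>) = 0" using pU fA by simp
      finally have "\<phi> (Js \<psi>) = 0" by simp
      then show False using z'v e by (simp add: \<phi>_def)
    qed
    have "Js \<psi> \<in> ?U \<inter> W" using JU JW by (rule IntI)
    then have J0: "Js \<psi> = 0" using inter by simp
    obtain w \<phi> where wp: "v = w + Js \<phi>" "w \<in> W" "linear \<phi>" using tr by blast
    have "\<psi> (Js \<phi>) = - \<phi> (Js \<psi>)" using skew lp wp(3) by metis
    also have "\<dots> = 0" using J0 wp(3) by (simp add: linear_0)
    finally have "\<psi> (Js \<phi>) = 0" .
    moreover have "\<psi> v = \<psi> w + \<psi> (Js \<phi>)" using wp(1) lp by (simp add: linear_add)
    ultimately have "\<psi> v = 0" using pW[OF wp(2)] by simp
    then show False using zv e by (simp add: \<psi>_def)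
  qed
  then show ?thesis using spanUW inter by simp
qed

end
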